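(* Let $\Omega\subset\mathbb{R}^2$ be a measurable set with $(x,y)\in\Omega\Rightarrow(-x,y)\in\Omega$, and let $w\ge0$ be a weight function on $\Omega$ with $w(x,y)=w(-x,y)$ and $\int_\Omega |x|^{m-l}|y|^l w(x,y)\,dx\,dy<\infty$ for all integers $m\ge l\ge 0$. Put $\Omega':=\{(y,x^2)\mid (x,y)\in\Omega\}$ and $v(x,y):=w(y^{1/2},x)$ for $(x,y)\in\Omega'$. Assume that the weight functions $y^{-1/2}v(x,y)$ and $y^{1/2}v(x,y)$ on $\Omega'$ also have all such moments finite. Let $p_{n,k}$ ($n\ge k\ge0$) be the monic dominance orthogonal polynomials on $\Omega$ with respect to $w$, and let $q_{n,k}$ and $r_{n,k}$ be the monic dominance orthogonal polynomials on $\Omega'$ with respect to $y^{-1/2}v(x,y)$ and $y^{1/2}v(x,y)$, respectively (assumed to exist and be unique, e.g. if the weights are positive on sets of positive measure where needed). Then for all integers $n\ge k\ge0$: $$q_{n,k}(y,x^2)=p_{n+k,n-k}(x,y),\qquad x\,r_{n,k}(y,x^2)=p_{n+k+1,n-k}(x,y).$$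
   Context: Monomials $x^{m-l}y^l$ are indexed by pairs $(m,l)$ of integers with $m\ge l\ge0$, with the dominance partial order $(m,l)\le(n,k)$ iff $m\le n$ and $m+l\le n+k$; $(m,l)<(n,k)$ means $(m,l)\le(n,k)$ and $(m,l)\ne(n,k)$. Given a region $D\subset\mathbb{R}^2$ and a weight $u$ on $D$ with all moments $\int_D|x|^{m-l}|y|^l u\,dx\,dy$ finite, the monic dominance orthogonal polynomials are polynomials $p_{n,k}(x,y)=\sum_{(m,l)\le(n,k)}c_{m,l}x^{m-l}y^l$ with $c_{n,k}=1$ such that $\int_D p_{n,k}(x,y)\,x^{m-l}y^l\,u(x,y)\,dx\,dy=0$ whenever $(m,l)<(n,k)$. *)

theory Defs
  imports "HOL-Analysis.Analysis"
begin

definition dom_le :: "nat \<times> nat \<Rightarrow> nat \<times> nat \<Rightarrow> bool" where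
  "dom_le a b \<longleftrightarrow> fst a \<le> fst b \<and> fst a + snd a \<le> fst b + snd b"

definition dom_below :: "nat \<Rightarrow> nat \<Rightarrow> (nat \<times> nat) set" where
  "dom_below n k = {(m, l). l \<le> m \<and> dom_le (m, l) (n, k)}"

definition monomial2 :: "nat \<times> nat \<Rightarrow> real \<times> real \<Rightarrow> real" where
  "monomial2 a z = fst z ^ (fst a - snd a) * snd z ^ snd a"

definition is_mdop :: "(real \<times> real) set \<Rightarrow> (real \<times> real \<Rightarrow> real) \<Rightarrow> nat \<Rightarrow> nat
    \<Rightarrow> (real \<times> real \<Rightarrow> real) \<Rightarrow> bool" where
  "is_mdop D u n k p \<longleftrightarrow>
     (\<exists>c :: nat \<times> nat \<Rightarrow> real. c (n, k) = 1 \<and>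
        (\<forall>z. p z = (\<Sum>a\<in>dom_below n k. c a * monomial2 a z))) \<and>
     (\<forall>a\<in>dom_below n k. a \<noteq> (n, k) \<longrightarrow>
        (LINT z : D | lebesgue. p z * monomial2 a z * u z) = 0)"

definition finite_moments :: "(real \<times> real) set \<Rightarrow> (real \<times> real \<Rightarrow> real) \<Rightarrow> bool" where
  "finite_moments D u \<longleftrightarrow>
     (\<forall>m l. l \<le> m \<longrightarrow>
        set_integrable lebesgue D (\<lambda>z. \<bar>fst z\<bar> ^ (m - l) * \<bar>snd z\<bar> ^ l * u z))"

end

theory Submission
  imports Defs
begin


definition vt :: "real^2 \<Rightarrow> real \<times> real" where "vt u = (u$1, u$2)"
definition tv :: "real \<times> real \<Rightarrow> real^2" where "tv z = (\<chi> i. if i = 1 then fst z else snd z)"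

lemma vt_tv[simp]: "vt (tv z) = z" by (simp add: vt_def tv_def)
lemma tv_vt[simp]: "tv (vt u) = u"
  unfolding vt_def tv_def by (simp add: vec_eq_iff) (metis exhaust_2)

lemma linear_vt: "linear vt"
  unfolding vt_def by (intro linearI) auto
lemma linear_tv: "linear tv"
  unfolding tv_def by (intro linearI) (auto simp: vec_eq_iff)

lemma vt_borel: "vt \<in> borel_measurable borel"
  by (intro borel_measurable_continuous_onI linear_continuous_on linear_conv_bounded_linear[THEN iffD1] linear_vt)

lemma tv_borel: "tv \<in> borel_measurable borel"
  by (intro borel_measurable_continuous_onI linear_continuous_on linear_conv_bounded_linear[THEN iffD1] linear_tv)

lemma box_prod_real: "box (a::real\<times>real) b = {z. fst a < fst z \<and> fst z < fst b \<and> snd a < snd z \<and> snd z < snd b}"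
  by (cases a; cases b) (auto simp: box_def Basis_prod_def)

lemma vt_box: "vt -` box a b = box (tv a) (tv b)"
  by (auto simp: box_prod_real mem_box_cart vt_def tv_def forall_2)


lemma prod_Basis_cart2: "(\<Prod>b\<in>(Basis::(real^2) set). f b) = f (axis 1 1) * f (axis 2 1)"
proof -
  have "(Basis::(real^2) set) = {axis 1 1, axis 2 1}"
    by (auto simp: Basis_vec_def) (metis exhaust_2)
  moreover have "axis 1 (1::real) \<noteq> (axis 2 1 :: real^2)" by (simp add: axis_eq_axis)
  moreover have "prod f {axis 1 1, axis 2 1} = f (axis 1 1) * f (axis 2 1)"
    using \<open>axis 1 (1::real) \<noteq> (axis 2 1 :: real^2)\<close> by simp
  ultimately show ?thesis by metis
qed

lemma prod_Basis_pair: "(\<Prod>b\<in>(Basis::(real\<times>real) set). f b) = f (1,0) * f (0,1)"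
  by (simp add: Basis_prod_def prod.union_disjoint mult.commute)

lemma distr_vt_lborel: "distr lborel borel vt = lborel"
proof (rule lborel_eqI[symmetric])
  fix l u :: "real \<times> real"
  assume "\<And>b. b \<in> Basis \<Longrightarrow> l \<bullet> b \<le> u \<bullet> b"
  note a = this
  have "l \<bullet> (1,0) \<le> u \<bullet> (1,0)" "l \<bullet> (0,1) \<le> u \<bullet> (0,1)"
    by (auto intro!: a simp: Basis_prod_def)
  then have le: "fst l \<le> fst u" "snd l \<le> snd u" by (cases l; cases u; simp)+
  have "emeasure (distr lborel borel vt) (box l u) = emeasure lborel (vt -` box l u)"
    by (simp add: emeasure_distr vt_borel)
  also have "\<dots> = emeasure lborel (box (tv l) (tv u))" by (simp add: vt_box)
  also have "\<dots> = (\<Prod>b\<in>Basis. (tv u - tv l) \<bullet> b)"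
    using le by (intro emeasure_lborel_box) (auto simp: Basis_vec_def cart_eq_inner_axis[symmetric] tv_def)
  also have "\<dots> = (\<Prod>b\<in>Basis. (u - l) \<bullet> b)"
    by (simp add: prod_Basis_cart2 prod_Basis_pair cart_eq_inner_axis[symmetric] tv_def inner_prod_def)
  finally show "emeasure (distr lborel borel vt) (box l u) = (\<Prod>b\<in>Basis. (u - l) \<bullet> b)" .
qed simp


lemma distr_tv_lborel: "distr lborel borel tv = lborel"
proof -
  have "distr lborel borel tv = distr (distr lborel borel vt) borel tv"
    by (simp add: distr_vt_lborel)
  also have "\<dots> = distr lborel borel (tv \<circ> vt)"
    by (intro distr_distr) (auto simp: vt_borel tv_borel)
  also have "\<dots> = lborel" by (simp add: o_def distr_id2 cong: distr_cong)
  finally show ?thesis .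
qed

lemma vt_lborel: "vt \<in> lborel \<rightarrow>\<^sub>M lborel" using vt_borel by simp
lemma tv_lborel: "tv \<in> lborel \<rightarrow>\<^sub>M lborel" using tv_borel by simp

lemma distr_vt_lborel': "distr lborel lborel vt = lborel"
  using distr_vt_lborel by (metis distr_cong sets_lborel)
lemma distr_tv_lborel': "distr lborel lborel tv = lborel"
  using distr_tv_lborel by (metis distr_cong sets_lborel)

lemma vt_leb_meas: "vt \<in> lebesgue \<rightarrow>\<^sub>M lebesgue"
proof -
  have 1: "vt \<in> lebesgue \<rightarrow>\<^sub>M lborel" by (rule measurable_completion[OF vt_lborel])
  have "distr lebesgue lborel vt = lborel"
    using distr_completion[OF vt_lborel] distr_vt_lborel' by simp
  then show ?thesis
    using completion.measurable_completion2[OF 1] by simp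
qed

lemma tv_leb_meas: "tv \<in> lebesgue \<rightarrow>\<^sub>M lebesgue"
proof -
  have 1: "tv \<in> lebesgue \<rightarrow>\<^sub>M lborel" by (rule measurable_completion[OF tv_lborel])
  have "distr lebesgue lborel tv = lborel"
    using distr_completion[OF tv_lborel] distr_tv_lborel' by simp
  then show ?thesis
    using completion.measurable_completion2[OF 1] by simp
qed

lemma distr_vt_leb: "distr lebesgue lebesgue vt = lebesgue"
proof -
  have 1: "vt \<in> lebesgue \<rightarrow>\<^sub>M lborel" by (rule measurable_completion[OF vt_lborel])
  have 2: "distr lebesgue lborel vt = lborel"
    using distr_completion[OF vt_lborel] distr_vt_lborel' by simp
  show ?thesis
    using completion.completion_distr_eq[OF 1] 2 by simp
qed

lemma integral_vt:
  fixes g :: "real \<times> real \<Rightarrow> real"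
  shows "integral\<^sup>L lebesgue g = integral\<^sup>L lebesgue (\<lambda>u. g (vt u))"
proof (cases "g \<in> borel_measurable lebesgue")
  case True
  then show ?thesis
    using integral_distr[OF vt_leb_meas True] distr_vt_leb by simp
next
  case False
  have "\<not> (\<lambda>u. g (vt u)) \<in> borel_measurable lebesgue"
  proof
    assume "(\<lambda>u. g (vt u)) \<in> borel_measurable lebesgue"
    from measurable_comp[OF tv_leb_meas this] have "g \<in> borel_measurable lebesgue"
      by (simp add: o_def)
    with False show False by simp
  qed
  with False show ?thesis by (metis borel_measurable_integrable not_integrable_integral_eq)
qed



lemma LI_eq:
  fixes f :: "'a::euclidean_space \<Rightarrow> real"
  shows "(LINT x:S|lebesgue. f x) = (if f absolutely_integrable_on S then integral S f else 0)"
proof (cases "f absolutely_integrable_on S")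
  case True
  then show ?thesis using set_lebesgue_integral_eq_integral(2)[of S f] by simp
next
  case False
  then show ?thesis
    unfolding set_lebesgue_integral_def set_integrable_def
    by (simp add: not_integrable_integral_eq)
qed

lemma LI_spike:
  fixes f :: "'a::euclidean_space \<Rightarrow> real"
  assumes "negligible {x \<in> S - T. f x \<noteq> 0}" "negligible {x \<in> T - S. f x \<noteq> 0}"
  shows "(LINT x:S|lebesgue. f x) = (LINT x:T|lebesgue. f x)"
  unfolding LI_eq using absolutely_integrable_spike_set_eq[OF assms] integral_spike_set[OF assms]
  by simp

lemma LI_cov:
  fixes f :: "real^2 \<Rightarrow> real" and g :: "real^2 \<Rightarrow> real^2"
  assumes S: "S \<in> sets lebesgue"
    and der_g: "\<And>x. x \<in> S \<Longrightarrow> (g has_derivative g' x) (at x within S)"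
    and inj: "inj_on g S"
  shows "(LINT x:S|lebesgue. \<bar>det (matrix (g' x))\<bar> * f (g x)) = (LINT y:g ` S|lebesgue. f y)"
proof -
  let ?F = "\<lambda>y. vec (f y) :: real^1"
  have H: "\<And>b. (\<lambda>x. \<bar>det (matrix (g' x))\<bar> *\<^sub>R ?F (g x)) absolutely_integrable_on S \<and>
           integral S (\<lambda>x. \<bar>det (matrix (g' x))\<bar> *\<^sub>R ?F (g x)) = b
     \<longleftrightarrow> ?F absolutely_integrable_on (g ` S) \<and> integral (g ` S) ?F = b"
    by (rule has_absolute_integral_change_of_variables[OF S der_g inj])
  have e1: "(\<lambda>x. \<bar>det (matrix (g' x))\<bar> *\<^sub>R ?F (g x)) = (\<lambda>x. vec (\<bar>det (matrix (g' x))\<bar> * f (g x)))"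
    by (auto simp: vec_eq_iff)
  have A: "\<And>h :: real^2 \<Rightarrow> real. \<And>T. (\<lambda>x. vec (h x) :: real^1) absolutely_integrable_on T \<longleftrightarrow> h absolutely_integrable_on T"
    by (simp add: absolutely_integrable_on_1_iff)
  have B: "\<And>h :: real^2 \<Rightarrow> real. \<And>T. integral T (\<lambda>x. vec (h x) :: real^1) = vec (integral T h)"
    by (simp add: integral_on_1_eq)
  have H2: "\<And>b. (\<lambda>x. \<bar>det (matrix (g' x))\<bar> * f (g x)) absolutely_integrable_on S \<and>
           integral S (\<lambda>x. \<bar>det (matrix (g' x))\<bar> * f (g x)) = b
     \<longleftrightarrow> f absolutely_integrable_on (g ` S) \<and> integral (g ` S) f = b"
  proof -
    fix b
    have vi: "\<And>a c :: real. (vec a = (vec c :: real^1)) = (a = c)" by (simp add: vec_eq_iff)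
    show "?thesis b" using H[of "vec b"] unfolding e1 A B vi .
  qed
  show ?thesis
  proof (cases "f absolutely_integrable_on (g ` S)")
    case True
    then show ?thesis unfolding LI_eq using H2[of "integral (g ` S) f"] by simp
  next
    case False
    then have "\<not> (\<lambda>x. \<bar>det (matrix (g' x))\<bar> * f (g x)) absolutely_integrable_on S"
      using H2 by blast
    then show ?thesis unfolding LI_eq using False by simp
  qed
qed

lemma AI_cov:
  fixes f :: "real^2 \<Rightarrow> real" and g :: "real^2 \<Rightarrow> real^2"
  assumes S: "S \<in> sets lebesgue"
    and der_g: "\<And>x. x \<in> S \<Longrightarrow> (g has_derivative g' x) (at x within S)"
    and inj: "inj_on g S"
  shows "(\<lambda>x. \<bar>det (matrix (g' x))\<bar> * f (g x)) absolutely_integrable_on S \<longleftrightarrow> f absolutely_integrable_on (g ` S)"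
proof -
  let ?F = "\<lambda>y. vec (f y) :: real^1"
  have H: "\<And>b. (\<lambda>x. \<bar>det (matrix (g' x))\<bar> *\<^sub>R ?F (g x)) absolutely_integrable_on S \<and>
           integral S (\<lambda>x. \<bar>det (matrix (g' x))\<bar> *\<^sub>R ?F (g x)) = b
     \<longleftrightarrow> ?F absolutely_integrable_on (g ` S) \<and> integral (g ` S) ?F = b"
    by (rule has_absolute_integral_change_of_variables[OF S der_g inj])
  have e1: "(\<lambda>x. \<bar>det (matrix (g' x))\<bar> *\<^sub>R ?F (g x)) = (\<lambda>x. vec (\<bar>det (matrix (g' x))\<bar> * f (g x)))"
    by (auto simp: vec_eq_iff)
  have A: "\<And>h :: real^2 \<Rightarrow> real. \<And>T. (\<lambda>x. vec (h x) :: real^1) absolutely_integrable_on T \<longleftrightarrow> h absolutely_integrable_on T"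
    by (simp add: absolutely_integrable_on_1_iff)
  have B: "\<And>h :: real^2 \<Rightarrow> real. \<And>T. integral T (\<lambda>x. vec (h x) :: real^1) = vec (integral T h)"
    by (simp add: integral_on_1_eq)
  have H2: "\<And>b. (\<lambda>x. \<bar>det (matrix (g' x))\<bar> * f (g x)) absolutely_integrable_on S \<and>
           integral S (\<lambda>x. \<bar>det (matrix (g' x))\<bar> * f (g x)) = b
     \<longleftrightarrow> f absolutely_integrable_on (g ` S) \<and> integral (g ` S) f = b"
  proof -
    fix b
    have vi: "\<And>a c :: real. (vec a = (vec c :: real^1)) = (a = c)" by (simp add: vec_eq_iff)
    show "?thesis b" using H[of "vec b"] unfolding e1 A B vi .
  qed
  show ?thesis using H2 by blast
qed

definition rho :: "real^2 \<Rightarrow> real^2" where "rho u = (\<chi> i. if i = 1 then - u$1 else u$2)"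

lemma rho_rho[simp]: "rho (rho u) = u"
  by (simp add: rho_def vec_eq_iff forall_2)

lemma linear_rho: "linear rho"
  unfolding rho_def by (intro linearI) (auto simp: vec_eq_iff)

lemma det_rho: "\<bar>det (matrix rho)\<bar> = 1"
  unfolding det_2 by (simp add: matrix_def rho_def axis_def)

lemma LI_rho:
  fixes f :: "real^2 \<Rightarrow> real"
  assumes S: "S \<in> sets lebesgue"
  shows "(LINT x:S|lebesgue. f (rho x)) = (LINT y:rho ` S|lebesgue. f y)"
proof -
  have "(LINT x:S|lebesgue. \<bar>det (matrix rho)\<bar> * f (rho x)) = (LINT y:rho ` S|lebesgue. f y)"
    by (rule LI_cov[OF S]) (auto intro: linear_imp_has_derivative linear_rho inj_on_inverseI[of _ rho])
  then show ?thesis by (simp add: det_rho)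
qed


lemma AI_rho:
  fixes f :: "real^2 \<Rightarrow> real"
  assumes S: "S \<in> sets lebesgue"
  shows "(\<lambda>x. f (rho x)) absolutely_integrable_on S \<longleftrightarrow> f absolutely_integrable_on (rho ` S)"
proof -
  have "(\<lambda>x. \<bar>det (matrix rho)\<bar> * f (rho x)) absolutely_integrable_on S \<longleftrightarrow> f absolutely_integrable_on (rho ` S)"
    by (rule AI_cov[OF S]) (auto intro: linear_imp_has_derivative linear_rho inj_on_inverseI[of _ rho])
  then show ?thesis by (simp add: det_rho)
qed



lemma LINT_cong:
  fixes f g :: "'a \<Rightarrow> real"
  assumes "\<And>x. x \<in> A \<Longrightarrow> f x = g x"
  shows "(LINT x:A|M. f x) = (LINT x:A|M. g x)"
  unfolding set_lebesgue_integral_def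
  by (rule Bochner_Integration.integral_cong) (auto simp: assms indicator_def)

lemma LINT_vt:
  fixes f :: "real \<times> real \<Rightarrow> real"
  shows "(LINT z:S|lebesgue. f z) = (LINT u:(vt -` S)|lebesgue. f (vt u))"
  unfolding set_lebesgue_integral_def
  by (subst integral_vt) (simp add: indicator_def)

lemma vimage_vt_leb: "S \<in> sets lebesgue \<Longrightarrow> vt -` S \<in> sets lebesgue"
  using measurable_sets[OF vt_leb_meas, of S] by simp

definition phi2 :: "real^2 \<Rightarrow> real^2" where
  "phi2 u = (\<chi> i. if i = 1 then u$2 else (u$1)^2)"

definition phi2' :: "real^2 \<Rightarrow> real^2 \<Rightarrow> real^2" where
  "phi2' u h = (\<chi> i. if i = 1 then h$2 else 2 * u$1 * h$1)"

lemma phi2_alt: "phi2 = (\<lambda>u. (u$2) *\<^sub>R axis 1 1 + (u$1 * u$1) *\<^sub>R axis 2 1)"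
  by (auto simp: phi2_def vec_eq_iff axis_def forall_2 power2_eq_square)

lemma phi2'_alt: "phi2' u = (\<lambda>h. (h$2) *\<^sub>R axis 1 1 + (u$1 * h$1 + h$1 * u$1) *\<^sub>R axis 2 1)"
  by (auto simp: phi2'_def vec_eq_iff axis_def forall_2)

lemma phi2_deriv: "(phi2 has_derivative phi2' u) (at u within S)"
  unfolding phi2_alt phi2'_alt
  by (intro has_derivative_add has_derivative_scaleR_left has_derivative_mult
        bounded_linear_imp_has_derivative bounded_linear_vec_nth)

lemma det_phi2': "\<bar>det (matrix (phi2' u))\<bar> = 2 * \<bar>u$1\<bar>"
  unfolding det_2 by (simp add: matrix_def phi2'_def axis_def)

lemma inj_phi2: "inj_on phi2 {u. u$1 > 0}"
proof (rule inj_onI)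
  fix u u' assume u: "u \<in> {u. u$1 > 0}" and u': "u' \<in> {u. u$1 > 0}" and e: "phi2 u = phi2 u'"
  have "u$2 = u'$2" "(u$1)^2 = (u'$1)^2"
  proof -
    have "phi2 u $ 1 = phi2 u' $ 1" "phi2 u $ 2 = phi2 u' $ 2" using e by simp_all
    then show "u$2 = u'$2" "(u$1)^2 = (u'$1)^2" by (simp_all add: phi2_def)
  qed
  then have "u$1 = u'$1" using u u' by (simp add: power2_eq_iff)
  with \<open>u$2 = u'$2\<close> show "u = u'" by (simp add: vec_eq_iff forall_2)
qed



lemma vt_simp: "vt u = (u$1, u$2)" by (simp add: vt_def)
lemma rho_nth[simp]: "rho u $ 1 = - (u$1)" "rho u $ 2 = u$2" by (simp_all add: rho_def)
lemma vt_rho: "vt (rho u) = (-(u$1), u$2)" by (simp add: vt_def rho_def)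

lemma odd_zero:
  fixes \<Omega> :: "(real \<times> real) set" and H :: "real \<times> real \<Rightarrow> real"
  assumes meas: "\<Omega> \<in> sets lebesgue" and symm: "\<And>x y. (x,y) \<in> \<Omega> \<Longrightarrow> (-x,y) \<in> \<Omega>"
    and odd: "\<And>x y. (x,y) \<in> \<Omega> \<Longrightarrow> H (-x,y) = - H (x,y)"
  shows "(LINT z:\<Omega>|lebesgue. H z) = 0"
proof -
  define A where "A = vt -` \<Omega>"
  have A: "A \<in> sets lebesgue" unfolding A_def using vimage_vt_leb meas .
  have rA: "rho ` A = A"
  proof
    show "rho ` A \<subseteq> A" using symm by (auto simp: A_def vt_rho vt_simp)
    show "A \<subseteq> rho ` A"
    proof
      fix u assume "u \<in> A"
      then have "rho u \<in> A" using symm by (auto simp: A_def vt_rho vt_simp)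
      then show "u \<in> rho ` A" by (metis rho_rho image_eqI)
    qed
  qed
  have "(LINT u:A|lebesgue. H (vt (rho u))) = (LINT y:rho ` A|lebesgue. H (vt y))"
    by (rule LI_rho[OF A])
  also have "\<dots> = (LINT y:A|lebesgue. H (vt y))" using rA by simp
  finally have e: "(LINT u:A|lebesgue. H (vt (rho u))) = (LINT y:A|lebesgue. H (vt y))" .
  have "(LINT u:A|lebesgue. H (vt (rho u))) = (LINT u:A|lebesgue. (-1) * H (vt u))"
    by (rule LINT_cong) (auto simp: A_def vt_rho vt_simp odd)
  also have "\<dots> = - (LINT u:A|lebesgue. H (vt u))" by (simp only: set_integral_mult_right)
  finally have "(LINT y:A|lebesgue. H (vt y)) = 0" using e by simp
  then show ?thesis by (simp add: LINT_vt A_def)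
qed

lemma halfplane_leb: "{u::real^2. 0 < u$1} \<in> sets lebesgue"
proof -
  have "open {u::real^2. 0 < u$1}"
    by (intro open_Collect_less continuous_intros)
  then show ?thesis by auto
qed

lemma halfplane_leb': "{u::real^2. u$1 < 0} \<in> sets lebesgue"
proof -
  have "open {u::real^2. u$1 < 0}"
    by (intro open_Collect_less continuous_intros)
  then show ?thesis by auto
qed

lemma phi2_nth[simp]: "phi2 u $ 1 = u$2" "phi2 u $ 2 = (u$1)^2" by (simp_all add: phi2_def)

lemma even_cov:
  fixes \<Omega> :: "(real \<times> real) set" and F w :: "real \<times> real \<Rightarrow> real"
  assumes meas: "\<Omega> \<in> sets lebesgue" and symm: "\<And>x y. (x,y) \<in> \<Omega> \<Longrightarrow> (-x,y) \<in> \<Omega>"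
    and w_even: "\<And>x y. (x, y) \<in> \<Omega> \<Longrightarrow> w (x, y) = w (- x, y)"
  shows "(LINT z:\<Omega>|lebesgue. F (snd z, (fst z)^2) * w z)
       = (LINT u:(\<lambda>(x,y). (y, x^2)) ` \<Omega>|lebesgue. F u * (w (sqrt (snd u), fst u) / sqrt (snd u)))"
proof -
  define A :: "(real^2) set" where "A = vt -` \<Omega>"
  define Ap where "Ap = A \<inter> {u. 0 < u$1}"
  define Am where "Am = A \<inter> {u. u$1 < 0}"
  define G :: "real^2 \<Rightarrow> real" where "G u = F (u$2, (u$1)^2) * w (u$1, u$2)" for u
  define K :: "real^2 \<Rightarrow> real" where "K y = F (y$1, y$2) * w (sqrt (y$2), y$1) / (2 * sqrt (y$2))" for y
  define B where "B = vt -` ((\<lambda>(x,y). (y, x^2)) ` \<Omega>)"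
  have A: "A \<in> sets lebesgue" unfolding A_def using vimage_vt_leb meas .
  have Ap: "Ap \<in> sets lebesgue" unfolding Ap_def using A halfplane_leb by blast
  have Am: "Am \<in> sets lebesgue" unfolding Am_def using A halfplane_leb' by blast
  have rAp: "rho ` Ap = Am"
  proof
    show "rho ` Ap \<subseteq> Am" using symm by (auto simp: A_def Ap_def Am_def vt_simp)
    show "Am \<subseteq> rho ` Ap"
    proof
      fix u assume "u \<in> Am"
      then have "rho u \<in> Ap" using symm by (auto simp: A_def Ap_def Am_def vt_simp)
      then show "u \<in> rho ` Ap" by (metis rho_rho image_eqI)
    qed
  qed
  have Grho: "G (rho u) = G u" if "u \<in> Ap" for u
    using that w_even by (auto simp: G_def A_def Ap_def vt_simp)
  have L0: "(LINT z:\<Omega>|lebesgue. F (snd z, (fst z)^2) * w z) = (LINT u:A|lebesgue. G u)"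
    by (simp add: LINT_vt A_def G_def vt_simp)
  have I1: "(LINT u:Am|lebesgue. G u) = (LINT u:Ap|lebesgue. G u)"
  proof -
    have "(LINT u:Ap|lebesgue. G (rho u)) = (LINT y:rho ` Ap|lebesgue. G y)"
      by (rule LI_rho[OF Ap])
    moreover have "(LINT u:Ap|lebesgue. G (rho u)) = (LINT u:Ap|lebesgue. G u)"
      by (rule LINT_cong) (simp add: Grho)
    ultimately show ?thesis using rAp by simp
  qed
  have neg0: "negligible {u::real^2. u$1 = 0}" by (rule negligible_standard_hyperplane_cart)
  have I2: "(LINT u:A|lebesgue. G u) = 2 * (LINT u:Ap|lebesgue. G u)"
  proof (cases "G absolutely_integrable_on Ap")
    case True
    have "(\<lambda>x. G (rho x)) absolutely_integrable_on Ap"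
      using True set_integrable_cong[of lebesgue lebesgue Ap Ap "\<lambda>x. G (rho x)" G] Grho by simp
    then have iAm: "G absolutely_integrable_on Am" using AI_rho[OF Ap] rAp by simp
    have "(LINT u:A|lebesgue. G u) = (LINT u:Ap \<union> Am|lebesgue. G u)"
    proof (rule LI_spike)
      show "negligible {x \<in> A - (Ap \<union> Am). G x \<noteq> 0}"
        by (rule negligible_subset[OF neg0]) (auto simp: Ap_def Am_def)
      show "negligible {x \<in> (Ap \<union> Am) - A. G x \<noteq> 0}"
        by (rule negligible_subset[of "{}"]) (auto simp: Ap_def Am_def)
    qed
    also have "\<dots> = (LINT u:Ap|lebesgue. G u) + (LINT u:Am|lebesgue. G u)"
      by (rule set_integral_Un) (use True iAm in \<open>auto simp: Ap_def Am_def\<close>)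
    finally show ?thesis using I1 by simp
  next
    case False
    have "\<not> G absolutely_integrable_on A"
    proof
      assume "G absolutely_integrable_on A"
      then have "G absolutely_integrable_on Ap"
        by (rule set_integrable_subset) (use Ap in \<open>auto simp: Ap_def\<close>)
      with False show False by simp
    qed
    then show ?thesis using False by (simp add: LI_eq)
  qed
  have I3: "(LINT u:Ap|lebesgue. G u) = (LINT y:phi2 ` Ap|lebesgue. K y)"
  proof -
    have "(LINT u:Ap|lebesgue. \<bar>det (matrix (phi2' u))\<bar> * K (phi2 u)) = (LINT y:phi2 ` Ap|lebesgue. K y)"
      by (rule LI_cov[OF Ap phi2_deriv]) (rule inj_on_subset[OF inj_phi2], auto simp: Ap_def)
    moreover have "(LINT u:Ap|lebesgue. \<bar>det (matrix (phi2' u))\<bar> * K (phi2 u)) = (LINT u:Ap|lebesgue. G u)"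
    proof (rule LINT_cong)
      fix u assume u: "u \<in> Ap"
      then have p: "0 < u$1" by (simp add: Ap_def)
      then have s: "sqrt ((u$1)^2) = u$1" by simp
      show "\<bar>det (matrix (phi2' u))\<bar> * K (phi2 u) = G u"
        unfolding det_phi2' K_def G_def using p by (simp add: s)
    qed
    ultimately show ?thesis by simp
  qed
  have sub: "phi2 ` Ap \<subseteq> B"
  proof
    fix y assume "y \<in> phi2 ` Ap"
    then obtain u where u: "u \<in> Ap" "y = phi2 u" by blast
    then have "(u$1, u$2) \<in> \<Omega>" by (simp add: Ap_def A_def vt_simp)
    then have "(u$2, (u$1)^2) \<in> (\<lambda>(x,y). (y, x^2)) ` \<Omega>" by (force intro: image_eqI)
    then show "y \<in> B" using u by (simp add: B_def vt_simp)
  qed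
  have sub2: "B - phi2 ` Ap \<subseteq> {y. y$2 = 0}"
  proof
    fix y assume y: "y \<in> B - phi2 ` Ap"
    then obtain a b where ab: "(a,b) \<in> \<Omega>" "y$1 = b" "y$2 = a^2"
      by (auto simp: B_def vt_simp)
    have yeq: "y = phi2 (tv (c, b))" if "c^2 = a^2" for c
      using ab that by (simp add: vec_eq_iff forall_2 tv_def)
    show "y \<in> {y. y$2 = 0}"
    proof (cases "a = 0")
      case True then show ?thesis using ab by simp
    next
      case False
      show ?thesis
      proof (cases "a > 0")
        case True
        have "tv (a, b) \<in> Ap" using True ab by (simp add: Ap_def A_def tv_def vt_simp)
        then have "y \<in> phi2 ` Ap" using yeq[of a] by blast
        with y show ?thesis by blast
      next
        case False': False
        have "tv (-a, b) \<in> Ap" using False False' ab symm by (simp add: Ap_def A_def tv_def vt_simp)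
        then have "y \<in> phi2 ` Ap" using yeq[of "-a"] by simp
        with y show ?thesis by blast
      qed
    qed
  qed
  have I4: "(LINT u:(\<lambda>(x,y). (y, x^2)) ` \<Omega>|lebesgue. F u * (w (sqrt (snd u), fst u) / sqrt (snd u)))
      = (LINT y:B|lebesgue. 2 * K y)"
    unfolding LINT_vt B_def[symmetric]
    by (rule LINT_cong) (simp add: K_def vt_simp)
  also have "\<dots> = (LINT y:phi2 ` Ap|lebesgue. 2 * K y)"
  proof (rule LI_spike)
    show "negligible {x \<in> B - phi2 ` Ap. 2 * K x \<noteq> 0}"
      by (rule negligible_subset[OF negligible_standard_hyperplane_cart[of 2]]) (use sub2 in auto)
    show "negligible {x \<in> phi2 ` Ap - B. 2 * K x \<noteq> 0}"
      by (rule negligible_subset[of "{}"]) (use sub in auto)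
  qed
  also have "\<dots> = 2 * (LINT y:phi2 ` Ap|lebesgue. K y)" by simp
  finally show ?thesis using L0 I2 I3 by simp
qed



lemma finite_dom_below: "finite (dom_below n k)"
proof -
  have "dom_below n k \<subseteq> {0..n} \<times> {0..n}"
    by (auto simp: dom_below_def dom_le_def)
  then show ?thesis by (rule finite_subset) auto
qed

lemma poly_comp:
  fixes Q :: "real \<times> real \<Rightarrow> real" and c :: "nat \<times> nat \<Rightarrow> real"
  assumes nk: "k \<le> n" and c1: "c (n,k) = 1"
    and Qeq: "\<And>z. Q z = (\<Sum>a\<in>dom_below n k. c a * monomial2 a z)"
  shows "\<exists>c'. c' (n+k+e, n-k) = 1 \<and>
     (\<forall>z. fst z ^ e * Q (snd z, (fst z)^2) = (\<Sum>b\<in>dom_below (n+k+e) (n-k). c' b * monomial2 b z))"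
proof -
  define D where "D = dom_below n k"
  define \<psi> where "\<psi> = (\<lambda>(m::nat,l::nat). (m+l+e, m-l))"
  have inj: "inj_on \<psi> D"
    by (rule inj_onI) (auto simp: \<psi>_def D_def dom_below_def)
  have sub: "\<psi> ` D \<subseteq> dom_below (n+k+e) (n-k)"
    using nk by (auto simp: \<psi>_def D_def dom_below_def dom_le_def)
  define c' where "c' b = (if b \<in> \<psi> ` D then c (the_inv_into D \<psi> b) else 0)" for b
  have c'\<psi>: "c' (\<psi> a) = c a" if "a \<in> D" for a
    using that inj by (simp add: c'_def the_inv_into_f_f)
  have top: "(n,k) \<in> D" by (simp add: D_def dom_below_def dom_le_def nk)
  have mono: "monomial2 (\<psi> a) z = fst z ^ e * monomial2 a (snd z, (fst z)^2)" if "a \<in> D" for a z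
  proof -
    obtain m l where a: "a = (m,l)" by (cases a)
    with that have lm: "l \<le> m" by (simp add: D_def dom_below_def)
    have "m + l + e - (m - l) = e + 2*l" using lm by simp
    then show ?thesis using a
      by (simp add: \<psi>_def monomial2_def power_add power_mult)
  qed
  show ?thesis
  proof (intro exI conjI allI)
    show "c' (n+k+e, n-k) = 1" using c'\<psi>[OF top] c1 by (simp add: \<psi>_def)
    fix z :: "real \<times> real"
    have "(\<Sum>b\<in>dom_below (n+k+e) (n-k). c' b * monomial2 b z) = (\<Sum>b\<in>\<psi> ` D. c' b * monomial2 b z)"
      by (rule sum.mono_neutral_cong_right[OF finite_dom_below sub]) (auto simp: c'_def)
    also have "\<dots> = (\<Sum>a\<in>D. c' (\<psi> a) * monomial2 (\<psi> a) z)"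
      by (rule sum.reindex[OF inj, unfolded o_def])
    also have "\<dots> = (\<Sum>a\<in>D. fst z ^ e * (c a * monomial2 a (snd z, (fst z)^2)))"
      by (rule sum.cong) (auto simp: c'\<psi> mono)
    also have "\<dots> = fst z ^ e * Q (snd z, (fst z)^2)"
      by (simp add: Qeq D_def sum_distrib_left)
    finally show "fst z ^ e * Q (snd z, (fst z)^2) = (\<Sum>b\<in>dom_below (n+k+e) (n-k). c' b * monomial2 b z)" ..
  qed
qed

lemma neg_pow_odd: "odd (a + b) \<Longrightarrow> (- x::real) ^ a * (- x) ^ b = - (x ^ a * x ^ b)"
  by (simp add: power_add[symmetric] power_minus_odd)

lemma transfer_mdop:
  fixes \<Omega> :: "(real \<times> real) set" and w U Qf :: "real \<times> real \<Rightarrow> real"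
  assumes meas: "\<Omega> \<in> sets lebesgue" and symm: "\<And>x y. (x,y) \<in> \<Omega> \<Longrightarrow> (-x,y) \<in> \<Omega>"
    and w_even: "\<And>x y. (x, y) \<in> \<Omega> \<Longrightarrow> w (x, y) = w (- x, y)"
    and nk: "k \<le> n" and e: "e \<le> 1"
    and Qm: "is_mdop ((\<lambda>(x,y). (y, x^2)) ` \<Omega>) U n k Qf"
    and Urel: "\<And>u j. u \<in> (\<lambda>(x,y). (y, x^2)) ` \<Omega> \<Longrightarrow>
       snd u ^ (j + e) * (w (sqrt (snd u), fst u) / sqrt (snd u)) = snd u ^ j * U u"
  shows "is_mdop \<Omega> w (n+k+e) (n-k) (\<lambda>z. fst z ^ e * Qf (snd z, (fst z)^2))"
proof -
  let ?\<Omega>' = "(\<lambda>(x,y). (y, x^2)) ` \<Omega>"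
  obtain c where c1: "c (n,k) = 1" and Qeq: "\<And>z. Qf z = (\<Sum>a\<in>dom_below n k. c a * monomial2 a z)"
    and orth: "\<And>a. a \<in> dom_below n k \<Longrightarrow> a \<noteq> (n,k) \<Longrightarrow> (LINT z:?\<Omega>'|lebesgue. Qf z * monomial2 a z * U z) = 0"
    using Qm unfolding is_mdop_def by blast
  show ?thesis
    unfolding is_mdop_def
  proof (intro conjI ballI impI)
    show "\<exists>c'. c' (n+k+e, n-k) = 1 \<and>
     (\<forall>z. fst z ^ e * Qf (snd z, (fst z)^2) = (\<Sum>b\<in>dom_below (n+k+e) (n-k). c' b * monomial2 b z))"
      by (rule poly_comp[OF nk c1 Qeq])
  next
    fix b assume b: "b \<in> dom_below (n+k+e) (n-k)" and bne: "b \<noteq> (n+k+e, n-k)"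
    obtain M L where bML: "b = (M, L)" by (cases b)
    define d where "d = M - L"
    have LM: "L \<le> M" "M \<le> n+k+e" "M + L \<le> n+k+e + (n-k)"
      using b by (auto simp: bML dom_below_def dom_le_def)
    let ?H = "\<lambda>z. fst z ^ e * Qf (snd z, (fst z)^2) * monomial2 b z * w z"
    show "(LINT z:\<Omega>|lebesgue. ?H z) = 0"
    proof (cases "odd (e + d)")
      case True
      show ?thesis
      proof (rule odd_zero[OF meas symm])
        fix x y assume xy: "(x,y) \<in> \<Omega>"
        have "(-x) ^ e * (-x) ^ d = - (x ^ e * x ^ d)" using True by (rule neg_pow_odd)
        note od = this
        have m1: "monomial2 b (-x,y) = (-x)^d * y^L" by (simp add: bML monomial2_def d_def)
        have m2: "monomial2 b (x,y) = x^d * y^L" by (simp add: bML monomial2_def d_def)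
        have "?H (-x, y) = ((-x) ^ e * (-x) ^ d) * (Qf (y, x^2) * y ^ L * w (x, y))"
          by (simp only: m1 fst_conv snd_conv w_even[OF xy, symmetric]) (simp add: mult_ac)
        also have "\<dots> = - ((x ^ e * x ^ d) * (Qf (y, x^2) * y ^ L * w (x, y)))"
          by (simp only: od mult_minus_left)
        also have "(x ^ e * x ^ d) * (Qf (y, x^2) * y ^ L * w (x, y)) = ?H (x, y)"
          by (simp only: m2 fst_conv snd_conv) (simp add: mult_ac)
        finally show "?H (-x, y) = - ?H (x, y)" .
      qed
    next
      case False
      then obtain J where J: "e + d = 2 * J" by (metis evenE)
      define j where "j = J - e"
      have Jj: "J = j + e" using J e LM unfolding j_def d_def by (cases "e = 0") auto
      have xp: "x ^ e * x ^ d = (x^2) ^ J" for x :: real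
        by (simp add: power_add[symmetric] power_mult[symmetric] J)
      have "(LINT z:\<Omega>|lebesgue. ?H z) =
            (LINT z:\<Omega>|lebesgue. (\<lambda>u. Qf u * (snd u ^ J * fst u ^ L)) (snd z, (fst z)^2) * w z)"
      proof (rule LINT_cong)
        fix z :: "real \<times> real"
        have "fst z ^ e * fst z ^ d = (fst z ^ 2) ^ J" by (rule xp)
        then show "?H z = (\<lambda>u. Qf u * (snd u ^ J * fst u ^ L)) (snd z, (fst z)^2) * w z"
          by (simp add: bML monomial2_def d_def[symmetric] algebra_simps)
      qed
      also have "\<dots> = (LINT u:?\<Omega>'|lebesgue. Qf u * (snd u ^ J * fst u ^ L) * (w (sqrt (snd u), fst u) / sqrt (snd u)))"
        by (rule even_cov[OF meas symm w_even])
      also have "\<dots> = (LINT u:?\<Omega>'|lebesgue. Qf u * monomial2 (L + j, j) u * U u)"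
      proof (rule LINT_cong)
        fix u assume u: "u \<in> ?\<Omega>'"
        show "Qf u * (snd u ^ J * fst u ^ L) * (w (sqrt (snd u), fst u) / sqrt (snd u)) = Qf u * monomial2 (L + j, j) u * U u"
        proof -
          let ?W = "w (sqrt (snd u), fst u) / sqrt (snd u)"
          have r: "snd u ^ J * ?W = snd u ^ j * U u" using Urel[OF u, of j] by (simp only: Jj)
          have "Qf u * (snd u ^ J * fst u ^ L) * ?W = Qf u * fst u ^ L * (snd u ^ J * ?W)"
            by (simp only: mult_ac)
          also have "\<dots> = Qf u * fst u ^ L * (snd u ^ j * U u)" by (simp only: r)
          also have "\<dots> = Qf u * monomial2 (L + j, j) u * U u"
            by (simp add: monomial2_def mult_ac)
          finally show ?thesis .
        qed
      qed
      also have "\<dots> = 0"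
      proof (rule orth)
        show "(L + j, j) \<in> dom_below n k"
          using LM J Jj nk e unfolding dom_below_def dom_le_def d_def by auto
        show "(L + j, j) \<noteq> (n, k)"
          using LM J Jj nk e bne unfolding bML d_def by auto
      qed
      finally show ?thesis .
    qed
  qed
qed


theorem proposition3p1:
  fixes \<Omega> :: "(real \<times> real) set"
    and w :: "real \<times> real \<Rightarrow> real"
    and P Q R :: "nat \<Rightarrow> nat \<Rightarrow> real \<times> real \<Rightarrow> real"
  defines "\<Omega>' \<equiv> (\<lambda>(x, y). (y, x ^ 2)) ` \<Omega>"
    and "v \<equiv> (\<lambda>(x, y). w (sqrt y, x))"
  assumes meas: "\<Omega> \<in> sets lebesgue"
    and symm: "\<And>x y. (x, y) \<in> \<Omega> \<Longrightarrow> (- x, y) \<in> \<Omega>"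
    and w_nonneg: "\<And>z. z \<in> \<Omega> \<Longrightarrow> w z \<ge> 0"
    and w_even: "\<And>x y. (x, y) \<in> \<Omega> \<Longrightarrow> w (x, y) = w (- x, y)"
    and mom_w: "finite_moments \<Omega> w"
    and mom_v1: "finite_moments \<Omega>' (\<lambda>(x, y). v (x, y) / sqrt y)"
    and mom_v2: "finite_moments \<Omega>' (\<lambda>(x, y). sqrt y * v (x, y))"
    and P_ex: "\<And>n k. k \<le> n \<Longrightarrow> is_mdop \<Omega> w n k (P n k)"
    and P_uniq: "\<And>n k f. k \<le> n \<Longrightarrow> is_mdop \<Omega> w n k f \<Longrightarrow> f = P n k"
    and Q_ex: "\<And>n k. k \<le> n \<Longrightarrow> is_mdop \<Omega>' (\<lambda>(x, y). v (x, y) / sqrt y) n k (Q n k)"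
    and Q_uniq: "\<And>n k f. k \<le> n \<Longrightarrow> is_mdop \<Omega>' (\<lambda>(x, y). v (x, y) / sqrt y) n k f
                   \<Longrightarrow> f = Q n k"
    and R_ex: "\<And>n k. k \<le> n \<Longrightarrow> is_mdop \<Omega>' (\<lambda>(x, y). sqrt y * v (x, y)) n k (R n k)"
    and R_uniq: "\<And>n k f. k \<le> n \<Longrightarrow> is_mdop \<Omega>' (\<lambda>(x, y). sqrt y * v (x, y)) n k f
                   \<Longrightarrow> f = R n k"
    and nk: "k \<le> n"
  shows "(\<forall>x y. Q n k (y, x ^ 2) = P (n + k) (n - k) (x, y)) \<and>
         (\<forall>x y. x * R n k (y, x ^ 2) = P (n + k + 1) (n - k) (x, y))"
  proof -
  have Qm: "is_mdop ((\<lambda>(x,y). (y, x^2)) ` \<Omega>) (\<lambda>(x, y). v (x, y) / sqrt y) n k (Q n k)"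
    using Q_ex[OF nk] unfolding \<Omega>'_def .
  have Rm: "is_mdop ((\<lambda>(x,y). (y, x^2)) ` \<Omega>) (\<lambda>(x, y). sqrt y * v (x, y)) n k (R n k)"
    using R_ex[OF nk] unfolding \<Omega>'_def .
  have h1: "is_mdop \<Omega> w (n+k+0) (n-k) (\<lambda>z. fst z ^ 0 * Q n k (snd z, (fst z)^2))"
  proof (rule transfer_mdop[OF meas symm w_even nk _ Qm])
    fix u :: "real \<times> real" and j :: nat
    show "snd u ^ (j + 0) * (w (sqrt (snd u), fst u) / sqrt (snd u)) = snd u ^ j * (\<lambda>(x, y). v (x, y) / sqrt y) u"
      by (cases u) (simp add: v_def)
  qed auto
  have e1: "(\<lambda>z. fst z ^ 0 * Q n k (snd z, (fst z)^2)) = P (n+k) (n-k)"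
    using P_uniq[of "n-k" "n+k"] h1 by simp
  have h2: "is_mdop \<Omega> w (n+k+1) (n-k) (\<lambda>z. fst z ^ 1 * R n k (snd z, (fst z)^2))"
  proof (rule transfer_mdop[OF meas symm w_even nk _ Rm])
    fix u :: "real \<times> real" and j :: nat
    assume "u \<in> (\<lambda>(x,y). (y, x^2)) ` \<Omega>"
    then have t: "snd u \<ge> 0" by auto
    have q: "snd u / sqrt (snd u) = sqrt (snd u)" using t by (rule real_div_sqrt)
    have "snd u ^ (j + 1) * (w (sqrt (snd u), fst u) / sqrt (snd u))
        = snd u ^ j * ((snd u / sqrt (snd u)) * w (sqrt (snd u), fst u))"
      by (simp add: power_add)
    also have "\<dots> = snd u ^ j * (sqrt (snd u) * w (sqrt (snd u), fst u))"
      by (simp only: q)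
    also have "\<dots> = snd u ^ j * (\<lambda>(x, y). sqrt y * v (x, y)) u"
      by (cases u) (simp add: v_def)
    finally show "snd u ^ (j + 1) * (w (sqrt (snd u), fst u) / sqrt (snd u)) = snd u ^ j * (\<lambda>(x, y). sqrt y * v (x, y)) u" .
  qed auto
  have e2: "(\<lambda>z. fst z ^ 1 * R n k (snd z, (fst z)^2)) = P (n+k+1) (n-k)"
    using P_uniq[of "n-k" "n+k+1"] h2 by simp
  show ?thesis
  proof (intro conjI allI)
    fix x y :: real
    show "Q n k (y, x ^ 2) = P (n + k) (n - k) (x, y)"
      using fun_cong[OF e1, of "(x,y)"] by simp
    show "x * R n k (y, x ^ 2) = P (n + k + 1) (n - k) (x, y)"
      using fun_cong[OF e2, of "(x,y)"] by simp
  qed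
qed

end
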